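(* Let $\xi_1=0$ and $\xi_{n+1}=\eta_{\xi_n}(\cos(2\pi/9))$ for $n\ge1$. Then the sequence $\{\xi_n\}_{n\ge1}$ is increasing (nondecreasing) in $n$, and its limit $\xi_\infty:=\lim_{n\to\infty}\xi_n$ satisfies $0.125\le\xi_\infty\le0.13$.
   Context: For $\xi\ge0$ and $y\in(0,1)$, $\eta_\xi(y)$ is the unique positive root $\delta$ of $(2+y)\delta^2+2(2+5y-(1+\xi)^2)\delta-4(1-y)(1+\xi)^2=0$, i.e. $\eta_\xi(y)=\frac{-2-5y+(1+\xi)^2+\sqrt{(2+5y-(1+\xi)^2)^2+4(2+y)(1-y)(1+\xi)^2}}{2+y}$. *)

theory Defs
  imports "HOL-Analysis.Analysis"
begin

definition eta :: "real \<Rightarrow> real \<Rightarrow> real" where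
  "eta \<xi> y = (-2 - 5*y + (1+\<xi>)^2
      + sqrt ((2 + 5*y - (1+\<xi>)^2)^2 + 4*(2+y)*(1-y)*(1+\<xi>)^2)) / (2+y)"

(* xi_seq n represents \<xi>_{n+1} of the paper (0-based indexing) *)
fun xi_seq :: "nat \<Rightarrow> real" where
  "xi_seq 0 = 0"
| "xi_seq (Suc n) = eta (xi_seq n) (cos (2*pi/9))"

end

theory Submission
  imports Defs
begin

definition Qf :: "real \<Rightarrow> real \<Rightarrow> real \<Rightarrow> real" where
  "Qf x d y = (2+y)*d^2 + 2*(2+5*y-(1+x)^2)*d - 4*(1-y)*(1+x)^2"

lemma cubic_fact: "8*(c::real)^3 - 6*c + 1 - (8*a^3 - 6*a + 1) = (c - a) * (8*(c*c + c*a + a*a) - 6)"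
  by (simp add: algebra_simps power2_eq_square power3_eq_cube)

lemma pos_aux: "\<lbrakk>1/2 * a \<le> X; 49/100 \<le> Y; 7/10 \<le> (a::real); 1/4 < Z\<rbrakk> \<Longrightarrow> 0 < 8 * (Z + X + Y) - 6"
  by (simp add: field_simps)

lemma cy_bounds: "0.766 \<le> cos (2*pi/9) \<and> cos (2*pi/9) \<le> 0.766045"
proof -
  define c where "c = cos (2*pi/9)"
  have "cos (3 * (2*pi/9)) = -1/2" using cos_120 by (simp add: field_simps)
  hence p: "8*c^3 - 6*c + 1 = 0" unfolding c_def cos_treble_cos by simp
  have "cos (pi/3) < c" unfolding c_def
    by (rule cos_monotone_0_pi) (use pi_gt_zero in auto)
  hence c5: "c > 1/2" using cos_60 by simp
  have cc: "c*c > 1/4"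
  proof -
    have "(1/2::real)^2 < c^2" by (rule power_strict_mono) (use c5 in auto)
    thus ?thesis by (simp add: power2_eq_square)
  qed
  have pos: "8*(c*c + c*a + a*a) - 6 > 0" if "a \<ge> 0.7" for a
  proof -
    have f1: "c*a \<ge> (1/2)*a" using c5 that by (intro mult_right_mono) auto
    have "a*a \<ge> 0.7*0.7" using that by (intro mult_mono) auto
    hence f2: "a*a \<ge> 49/100" by simp
    have f3: "a \<ge> 7/10" using that by simp
    show ?thesis using pos_aux[OF f1 f2 f3 cc] .
  qed
  have up: "c \<le> 0.766045"
  proof (rule ccontr)
    assume "\<not> ?thesis" hence h: "c - 0.766045 > 0" by simp
    have "(c - 0.766045) * (8*(c*c + c*0.766045 + 0.766045*0.766045) - 6) > 0"
      using h pos[of "0.766045"] by (intro mult_pos_pos) auto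
    hence "8*c^3 - 6*c + 1 - (8*0.766045^3 - 6*0.766045 + 1) > (0::real)"
      by (subst cubic_fact) 
    thus False using p by (simp add: power3_eq_cube)
  qed
  have lo: "0.766 \<le> c"
  proof (rule ccontr)
    assume "\<not> ?thesis" hence h: "c - 0.766 < 0" by simp
    have "(c - 0.766) * (8*(c*c + c*0.766 + 0.766*0.766) - 6) < 0"
      using h pos[of "0.766"] by (intro mult_neg_pos) auto
    hence "8*c^3 - 6*c + 1 - (8*0.766^3 - 6*0.766 + 1) < (0::real)"
      by (subst cubic_fact) 
    thus False using p by (simp add: power3_eq_cube)
  qed
  show ?thesis using up lo c_def by simp
qed


lemma eta_root:
  fixes \<xi> y :: real
  assumes y0: "0 < y" and y1: "y < 1" and x0: "0 \<le> \<xi>"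
  shows "Qf \<xi> (eta \<xi> y) y = 0 \<and> 0 < eta \<xi> y \<and>
         (\<forall>d\<ge>0. Qf \<xi> d y \<le> 0 \<longleftrightarrow> d \<le> eta \<xi> y)"
proof -
  define a where "a = (1+\<xi>)^2"
  define B where "B = 2+5*y"
  define s where "s = sqrt ((B-a)^2 + 4*(2+y)*(1-y)*a)"
  have a1: "a \<ge> 1" unfolding a_def using x0 mult_mono[of 1 "1+\<xi>" 1 "1+\<xi>"] by (simp add: power2_eq_square)
  have Ca: "4*(2+y)*(1-y)*a > 0" using a1 y0 y1 by simp
  have s0: "s \<ge> 0" unfolding s_def using Ca by simp
  have s2: "s^2 = (B-a)^2 + 4*(2+y)*(1-y)*a" unfolding s_def using Ca by simp
  have sgt: "s > a - B"
  proof (cases "a - B < 0")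
    case True then show ?thesis using s0 by simp
  next
    case False
    have "(a-B)^2 < s^2" using s2 Ca by (simp add: power2_commute)
    then show ?thesis using s0 False power_less_imp_less_base by blast
  qed
  have sgt2: "s > B - a"
  proof (cases "B - a < 0")
    case True then show ?thesis using s0 by simp
  next
    case False
    have "(B-a)^2 < s^2" using s2 Ca by simp
    then show ?thesis using s0 False power_less_imp_less_base by blast
  qed
  define \<delta> where "\<delta> = (a - B + s)/(2+y)"
  define \<delta>' where "\<delta>' = (a - B - s)/(2+y)"
  have e: "eta \<xi> y = \<delta>" unfolding eta_def \<delta>_def a_def B_def s_def by simp
  have dpos: "\<delta> > 0" unfolding \<delta>_def using sgt2 y0 by simp
  have d'neg: "\<delta>' < 0" unfolding \<delta>'_def using sgt y0 by (simp add: divide_neg_pos)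
  have fac: "Qf \<xi> d y = (2+y)*(d-\<delta>)*(d-\<delta>')" for d
  proof -
    have p0: "2+y \<noteq> 0" using y0 by simp
    have u: "d-\<delta> = ((2+y)*d - (a-B+s))/(2+y)" unfolding \<delta>_def using p0
      by (simp add: field_simps)
    have v: "d-\<delta>' = ((2+y)*d - (a-B-s))/(2+y)" unfolding \<delta>'_def using p0
      by (simp add: field_simps)
    have uv: "((2+y)*d - (a-B+s)) * ((2+y)*d - (a-B-s)) = ((2+y)*d - (a-B))^2 - s^2"
      by (simp add: algebra_simps power2_eq_square)
    have "(2+y)*(d-\<delta>)*(d-\<delta>') = ((2+y)*d - (a-B+s)) * ((2+y)*d - (a-B-s))/(2+y)"
      unfolding u v using p0 by (simp add: power2_eq_square)
    also have "\<dots> = (((2+y)*d - (a-B))^2 - s^2)/(2+y)" using uv by simp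
    also have "\<dots> = Qf \<xi> d y"
      unfolding s2 Qf_def a_def[symmetric] B_def using y0
      by (simp add: field_simps power2_eq_square)
    finally show ?thesis by simp
  qed
  have "\<forall>d\<ge>0. Qf \<xi> d y \<le> 0 \<longleftrightarrow> d \<le> \<delta>"
  proof (intro allI impI)
    fix d :: real assume "d \<ge> 0"
    hence p: "(2+y)*(d-\<delta>') > 0" using d'neg y0 by simp
    have e1: "Qf \<xi> d y = ((2+y)*(d-\<delta>'))*(d-\<delta>)" using fac by simp
    have "((2+y)*(d-\<delta>'))*(d-\<delta>) \<le> ((2+y)*(d-\<delta>'))*0 \<longleftrightarrow> d - \<delta> \<le> 0"
      by (rule mult_le_cancel_left_pos[OF p])
    then show "Qf \<xi> d y \<le> 0 \<longleftrightarrow> d \<le> \<delta>" using e1 by simp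
  qed
  moreover have "Qf \<xi> \<delta> y = 0" using fac by simp
  ultimately show ?thesis using e dpos by simp
qed

lemma Qf_diff: "Qf x2 d y - Qf x1 d y = -((1+x2)^2 - (1+x1)^2) * (2*d + 4*(1-y))"
  unfolding Qf_def by (simp add: algebra_simps)

lemma eta_mono:
  fixes y :: real
  assumes "0 < y" "y < 1" "0 \<le> x1" "x1 \<le> x2"
  shows "eta x1 y \<le> eta x2 y"
proof -
  have r1: "Qf x1 (eta x1 y) y = 0" "0 < eta x1 y" using eta_root[of y x1] assms by auto
  have "(1+x1)^2 \<le> (1+x2)^2" using assms by (intro power_mono) auto
  hence "Qf x2 (eta x1 y) y - Qf x1 (eta x1 y) y \<le> 0"
    unfolding Qf_diff using r1 assms by (intro mult_nonpos_nonneg) auto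
  hence "Qf x2 (eta x1 y) y \<le> 0" using r1 by simp
  thus ?thesis using eta_root[of y x2] assms r1 by auto
qed

lemma Qf_diag: "Qf x x y = -2*x^3 + (5*y-6)*x^2 + (18*y-6)*x - 4*(1-y)"
  unfolding Qf_def by (simp add: algebra_simps power2_eq_square power3_eq_cube)

lemma eta_bound:
  fixes y :: real
  assumes "0.766 \<le> y" "y \<le> 0.766045" "0 \<le> x" "x \<le> 0.13"
  shows "eta x y < 0.13"
proof (rule ccontr)
  assume "\<not> ?thesis"
  hence "Qf x 0.13 y \<le> 0" using eta_root[of y x] assms by auto
  moreover have "(1+x)^2 \<le> (1+0.13)^2" using assms by (intro power_mono) auto
  hence "Qf 0.13 0.13 y - Qf x 0.13 y \<le> 0"
    unfolding Qf_diff using assms by (intro mult_nonpos_nonneg) auto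
  moreover have "Qf 0.13 0.13 y > 0" using assms
    unfolding Qf_diag by (simp add: power2_eq_square power3_eq_cube field_simps)
  ultimately show False by simp
qed


lemma q_fact: "(-2*x^3 + (5*c-6)*x^2 + (18*c-6)*x - 4*(1-c)) -
   (-2*b^3 + (5*c-6)*b^2 + (18*c-6)*b - 4*(1-c)) =
   (x - b) * (-2*(x^2 + x*b + b^2) + (5*c-6)*(x+b) + (18*c-6))" for x b c :: real
  by (simp add: algebra_simps power2_eq_square power3_eq_cube)

lemma fixpt_low:
  fixes y L :: real
  assumes "0.766 \<le> y" "y \<le> 0.766045" "0 \<le> L" "L \<le> 0.13" "Qf L L y = 0"
  shows "0.125 \<le> L"
proof (rule ccontr)
  assume "\<not> ?thesis" hence h: "L < 1/8" by simp
  define c :: real where "c = 0.766045"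
  have "Qf L L c - Qf L L y = (c - y) * (5*L^2 + 18*L + 4)"
    unfolding Qf_diag by (simp add: algebra_simps)
  moreover have "(c - y) * (5*L^2 + 18*L + 4) \<ge> 0" using assms c_def by simp
  ultimately have ge: "Qf L L c \<ge> 0" using assms by simp
  have L2: "L^2 \<le> (1/8)^2" using h assms by (intro power_mono) auto
  have Lb: "L * (1/8) \<le> (1/8)*(1/8)" using h assms by simp
  have r: "-2*(L^2 + L*(1/8) + (1/8)^2) + (5*c-6)*(L+1/8) + (18*c-6) > 0"
    using L2 Lb h assms unfolding c_def by (simp add: power2_eq_square field_simps)
  have "(L - 1/8) * (-2*(L^2 + L*(1/8) + (1/8)^2) + (5*c-6)*(L+1/8) + (18*c-6)) < 0"
    using r h by (intro mult_neg_pos) auto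
  hence "Qf L L c - (-2*(1/8)^3 + (5*c-6)*(1/8)^2 + (18*c-6)*(1/8) - 4*(1-c)) < 0"
    unfolding Qf_diag by (subst q_fact)
  moreover have "(-2*(1/8)^3 + (5*c-6)*(1/8)^2 + (18*c-6)*(1/8) - 4*(1-c)) < (0::real)"
    unfolding c_def by (simp add: power2_eq_square power3_eq_cube)
  ultimately show False using ge by simp
qed

theorem lemma4p6:
  shows "mono xi_seq \<and> convergent xi_seq \<and>
         0.125 \<le> lim xi_seq \<and> lim xi_seq \<le> 0.13"
proof -
  define y where "y = cos (2*pi/9)"
  have yb: "0.766 \<le> y" "y \<le> 0.766045" using cy_bounds y_def by auto
  have y01: "0 < y" "y < 1" using yb by auto
  have xs: "xi_seq (Suc n) = eta (xi_seq n) y" for n using y_def by simp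
  have inv: "0 \<le> xi_seq n \<and> xi_seq n \<le> 0.13 \<and> xi_seq n \<le> xi_seq (Suc n)" for n
  proof (induction n)
    case 0
    have "0 < eta 0 y" using eta_root[of y 0] y01 by auto
    then show ?case using xs[of 0] by simp
  next
    case (Suc n)
    have a: "0 \<le> xi_seq (Suc n)" using Suc by simp
    have b: "xi_seq (Suc n) < 0.13" unfolding xs using eta_bound[OF yb] Suc by simp
    from Suc.IH have h1: "0 \<le> xi_seq n" and h2: "xi_seq n \<le> xi_seq (Suc n)" by blast+
    have c: "xi_seq (Suc n) \<le> xi_seq (Suc (Suc n))"
      using eta_mono[OF y01 h1 h2] xs[of n] xs[of "Suc n"] by metis
    show ?case using a b c by simp
  qed
  have mono: "mono xi_seq" using inv by (simp add: mono_iff_le_Suc)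
  have bs: "Bseq xi_seq"
  proof (rule BseqI')
    fix n show "norm (xi_seq n) \<le> 1" using inv[of n] by simp
  qed
  have conv: "convergent xi_seq"
    using Bseq_mono_convergent[OF bs] mono by (auto simp: mono_def)
  define L where "L = lim xi_seq"
  have lim: "xi_seq \<longlonglongrightarrow> L" using conv L_def convergent_LIMSEQ_iff by blast
  have lim2: "(\<lambda>n. xi_seq (Suc n)) \<longlonglongrightarrow> L" using lim by (rule LIMSEQ_Suc)
  have "(\<lambda>n. Qf (xi_seq n) (xi_seq (Suc n)) y) \<longlonglongrightarrow> Qf L L y"
    unfolding Qf_def by (intro tendsto_intros lim lim2)
  moreover have "Qf (xi_seq n) (xi_seq (Suc n)) y = 0" for n
    unfolding xs using eta_root[of y "xi_seq n"] y01 inv by auto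
  ultimately have Q0: "Qf L L y = 0" by (simp add: LIMSEQ_const_iff)
  have L0: "0 \<le> L" using lim inv by (intro LIMSEQ_le_const) auto
  have L1: "L \<le> 0.13" using lim inv by (intro LIMSEQ_le_const2) auto
  have "0.125 \<le> L" using fixpt_low[OF yb L0 L1 Q0] .
  thus ?thesis using mono conv L1 L_def by simp
qed

end
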